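(* The property $\mathrm{Split}(B_\Lambda,B_\Lambda)$ is hereditary: if a set of reals $X$ satisfies $\mathrm{Split}(B_\Lambda,B_\Lambda)$ and $Y\subseteq X$ is infinite, then $Y$ satisfies $\mathrm{Split}(B_\Lambda,B_\Lambda)$.
   Context: A set of reals is an infinite topological space homeomorphic to a subset of $\mathbb R$. A cover of a space $X$ is a family $\mathcal U$ of subsets of $X$ with $\bigcup\mathcal U=X$ such that $X\not\subseteq U$ for all $U\in\mathcal U$; it is a large cover if every $x\in X$ lies in infinitely many members of $\mathcal U$. $B_\Lambda$ is the collection of countable large covers of the space by Borel sets. A space satisfies $\mathrm{Split}(B_\Lambda,B_\Lambda)$ if every $\mathcal U\in B_\Lambda$ can be partitioned into two disjoint subfamilies each containing a subfamily belonging to $B_\Lambda$ (equivalently, each of which is itself a large cover). *)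

theory Defs
  imports "HOL-Analysis.Analysis"
begin

text \<open>Sets of reals are modelled as subsets of the real line with the subspace
topology. A subset of X is Borel (in X) iff it is the trace on X of a Borel set of reals.\<close>

definition borel_in :: "real set \<Rightarrow> real set \<Rightarrow> bool" where
  "borel_in X U \<longleftrightarrow> (\<exists>B. B \<in> sets (borel :: real measure) \<and> U = B \<inter> X)"

definition is_cover :: "real set \<Rightarrow> real set set \<Rightarrow> bool" where
  "is_cover X \<U> \<longleftrightarrow> (\<forall>U\<in>\<U>. U \<subseteq> X) \<and> \<Union>\<U> = X \<and> (\<forall>U\<in>\<U>. \<not> X \<subseteq> U)"

definition large_cover :: "real set \<Rightarrow> real set set \<Rightarrow> bool" where
  "large_cover X \<U> \<longleftrightarrow> is_cover X \<U> \<and> (\<forall>x\<in>X. infinite {U\<in>\<U>. x \<in> U})"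

definition B_Lambda :: "real set \<Rightarrow> real set set set" where
  "B_Lambda X = {\<U>. countable \<U> \<and> (\<forall>U\<in>\<U>. borel_in X U) \<and> large_cover X \<U>}"

definition Split_BL :: "real set \<Rightarrow> bool" where
  "Split_BL X \<longleftrightarrow> (\<forall>\<U>\<in>B_Lambda X. \<exists>\<V> \<W>. \<V> \<union> \<W> = \<U> \<and> \<V> \<inter> \<W> = {} \<and>
      (\<exists>\<V>'\<subseteq>\<V>. \<V>' \<in> B_Lambda X) \<and> (\<exists>\<W>'\<subseteq>\<W>. \<W>' \<in> B_Lambda X))"

end

theory Submission
  imports Defs
begin

theorem theorem7p4:
  fixes X Y :: "real set"
  assumes "infinite X" and "Split_BL X" and "Y \<subseteq> X" and "infinite Y"
  shows "Split_BL Y"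
  unfolding Split_BL_def
proof
  fix \<U> assume UB: "\<U> \<in> B_Lambda Y"
  have cU: "countable \<U>" and bU: "\<And>U. U \<in> \<U> \<Longrightarrow> borel_in Y U" and lU: "large_cover Y \<U>"
    using UB by (auto simp: B_Lambda_def)
  have sub: "\<And>U. U \<in> \<U> \<Longrightarrow> U \<subseteq> Y" and nsup: "\<And>U. U \<in> \<U> \<Longrightarrow> \<not> Y \<subseteq> U"
    and inf: "\<And>y. y \<in> Y \<Longrightarrow> infinite {U\<in>\<U>. y \<in> U}"
    using lU by (auto simp: large_cover_def is_cover_def)
  define B where "B U = (SOME B. B \<in> sets (borel :: real measure) \<and> U = B \<inter> Y)" for U
  have B: "B U \<in> sets borel \<and> U = B U \<inter> Y" if "U \<in> \<U>" for U
    using bU[OF that] unfolding borel_in_def B_def by (rule someI_ex)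
  define Z where "Z = {x. infinite {U\<in>\<U>. x \<in> B U}}"
  have Zeq: "Z = (\<Inter>F\<in>{F. finite F \<and> F \<subseteq> \<U>}. \<Union>U\<in>\<U> - F. B U)"
  proof (intro set_eqI iffI)
    fix x assume "x \<in> Z"
    hence i: "infinite {U\<in>\<U>. x \<in> B U}" by (simp add: Z_def)
    show "x \<in> (\<Inter>F\<in>{F. finite F \<and> F \<subseteq> \<U>}. \<Union>U\<in>\<U> - F. B U)"
    proof (clarsimp)
      fix F assume "finite F" "F \<subseteq> \<U>"
      hence "infinite ({U\<in>\<U>. x \<in> B U} - F)" using i by simp
      then obtain U where "U \<in> {U\<in>\<U>. x \<in> B U} - F" using infinite_imp_nonempty by blast
      thus "\<exists>U\<in>\<U> - F. x \<in> B U" by blast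
    qed
  next
    fix x assume a: "x \<in> (\<Inter>F\<in>{F. finite F \<and> F \<subseteq> \<U>}. \<Union>U\<in>\<U> - F. B U)"
    show "x \<in> Z"
    proof (rule ccontr)
      assume "x \<notin> Z"
      hence "finite {U\<in>\<U>. x \<in> B U}" by (simp add: Z_def)
      with a have "x \<in> (\<Union>U\<in>\<U> - {U\<in>\<U>. x \<in> B U}. B U)" by blast
      thus False by blast
    qed
  qed
  have Zb: "Z \<in> sets (borel :: real measure)"
    unfolding Zeq
    apply (rule sets.countable_INT'')
      apply simp
     apply (rule countable_Collect_finite_subset[OF cU])
    apply (rule sets.countable_UN'')
    using cU B by auto
  have YZ: "Y \<subseteq> Z"
  proof
    fix y assume y: "y \<in> Y"
    have "{U\<in>\<U>. y \<in> U} \<subseteq> {U\<in>\<U>. y \<in> B U}" using B by blast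
    thus "y \<in> Z" using inf[OF y] finite_subset unfolding Z_def by blast
  qed
  define f where "f U = (B U \<union> - Z) \<inter> X" for U
  have fY: "f U \<inter> Y = U" if "U \<in> \<U>" for U
    using B[OF that] YZ assms(3) unfolding f_def by blast
  have finj: "inj_on f \<U>" by (metis fY inj_onI)
  obtain y0 where "y0 \<in> Y" using assms(4) by fastforce
  have Uinf: "infinite \<U>"
  proof
    assume "finite \<U>"
    hence "finite {U\<in>\<U>. y0 \<in> U}" by simp
    thus False using inf[OF \<open>y0 \<in> Y\<close>] by blast
  qed
  have infX: "infinite {V\<in>f ` \<U>. x \<in> V}" if x: "x \<in> X" for x
  proof (cases "x \<in> Z")
    case True
    hence "infinite {U\<in>\<U>. x \<in> B U}" by (simp add: Z_def)
    hence "infinite (f ` {U\<in>\<U>. x \<in> B U})"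
      using finite_imageD finj inj_on_subset by (metis (no_types, lifting) mem_Collect_eq subsetI)
    moreover have "f ` {U\<in>\<U>. x \<in> B U} \<subseteq> {V\<in>f ` \<U>. x \<in> V}" using x unfolding f_def by auto
    ultimately show ?thesis using finite_subset by blast
  next
    case False
    hence "{V\<in>f ` \<U>. x \<in> V} = f ` \<U>" using x unfolding f_def by auto
    thus ?thesis using Uinf finj finite_imageD by metis
  qed
  have fB: "f ` \<U> \<in> B_Lambda X"
    unfolding B_Lambda_def large_cover_def is_cover_def
  proof (intro CollectI conjI ballI)
    show "countable (f ` \<U>)" using cU by simp
  next
    fix V assume "V \<in> f ` \<U>"
    then obtain U where U: "U \<in> \<U>" "V = f U" by blast
    have "B U \<union> - Z \<in> sets (borel :: real measure)" using B[OF U(1)] Zb by auto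
    thus "borel_in X V" unfolding borel_in_def U f_def by blast
    show "V \<subseteq> X" unfolding U f_def by blast
    show "\<not> X \<subseteq> V" using fY[OF U(1)] nsup[OF U(1)] assms(3) U(2) by blast
  next
    fix x assume "x \<in> X" thus "infinite {V\<in>f ` \<U>. x \<in> V}" by (rule infX)
  next
    show "\<Union> (f ` \<U>) = X"
    proof
      show "\<Union> (f ` \<U>) \<subseteq> X" unfolding f_def by blast
      show "X \<subseteq> \<Union> (f ` \<U>)"
      proof
        fix x assume "x \<in> X"
        from infX[OF this] obtain V where "V \<in> {V\<in>f ` \<U>. x \<in> V}"
          using infinite_imp_nonempty by blast
        thus "x \<in> \<Union> (f ` \<U>)" by blast
      qed
    qed
  qed
  have ex: "\<exists>\<V> \<W>. \<V> \<union> \<W> = f ` \<U> \<and> \<V> \<inter> \<W> = {} \<and>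
      (\<exists>\<V>'\<subseteq>\<V>. \<V>' \<in> B_Lambda X) \<and> (\<exists>\<W>'\<subseteq>\<W>. \<W>' \<in> B_Lambda X)"
    using assms(2) fB unfolding Split_BL_def by (rule bspec)
  then obtain \<V> \<W> where VW: "\<V> \<union> \<W> = f ` \<U>" "\<V> \<inter> \<W> = {}"
    and V': "\<exists>\<V>'\<subseteq>\<V>. \<V>' \<in> B_Lambda X" and W': "\<exists>\<W>'\<subseteq>\<W>. \<W>' \<in> B_Lambda X"
    by metis
  have restr: "{U\<in>\<U>. f U \<in> \<A>} \<in> B_Lambda Y" if A: "\<A> \<subseteq> f ` \<U>" "\<A> \<in> B_Lambda X" for \<A>
  proof -
    have lA: "infinite {V\<in>\<A>. x \<in> V}" "\<And>V. V \<in> \<A> \<Longrightarrow> \<not> X \<subseteq> V" if "x \<in> X" for x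
      using A(2) that by (auto simp: B_Lambda_def large_cover_def is_cover_def)
    have infY: "infinite {U\<in>{U\<in>\<U>. f U \<in> \<A>}. y \<in> U}" if y: "y \<in> Y" for y
    proof
      assume fin: "finite {U\<in>{U\<in>\<U>. f U \<in> \<A>}. y \<in> U}"
      have "{V\<in>\<A>. y \<in> V} \<subseteq> f ` {U\<in>{U\<in>\<U>. f U \<in> \<A>}. y \<in> U}"
      proof
        fix V assume "V \<in> {V\<in>\<A>. y \<in> V}"
        then obtain U where "U \<in> \<U>" "V = f U" "V \<in> \<A>" "y \<in> V" using A(1) by blast
        moreover have "y \<in> U" using fY[OF \<open>U \<in> \<U>\<close>] y \<open>y \<in> V\<close> \<open>V = f U\<close> by blast
        ultimately show "V \<in> f ` {U\<in>{U\<in>\<U>. f U \<in> \<A>}. y \<in> U}" by blast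
      qed
      moreover have "finite (f ` {U\<in>{U\<in>\<U>. f U \<in> \<A>}. y \<in> U})" using fin by simp
      ultimately have "finite {V\<in>\<A>. y \<in> V}" by (rule finite_subset)
      moreover have "y \<in> X" using y assms(3) by blast
      ultimately show False using lA(1) by blast
    qed
    show ?thesis
      unfolding B_Lambda_def large_cover_def is_cover_def
    proof (intro CollectI conjI ballI)
      show "countable {U\<in>\<U>. f U \<in> \<A>}" using cU by simp
      show "\<Union> {U\<in>\<U>. f U \<in> \<A>} = Y"
      proof
        show "\<Union> {U\<in>\<U>. f U \<in> \<A>} \<subseteq> Y" using sub by blast
        show "Y \<subseteq> \<Union> {U\<in>\<U>. f U \<in> \<A>}"
        proof
          fix y assume "y \<in> Y"
          from infY[OF this] obtain U where "U \<in> {U\<in>{U\<in>\<U>. f U \<in> \<A>}. y \<in> U}"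
            using infinite_imp_nonempty by blast
          thus "y \<in> \<Union> {U\<in>\<U>. f U \<in> \<A>}" by blast
        qed
      qed
    next
      fix y assume "y \<in> Y" thus "infinite {U\<in>{U\<in>\<U>. f U \<in> \<A>}. y \<in> U}" by (rule infY)
    qed (use bU sub nsup in auto)
  qed
  define \<V>Y where "\<V>Y = {U\<in>\<U>. f U \<in> \<V>}"
  define \<W>Y where "\<W>Y = {U\<in>\<U>. f U \<in> \<W>}"
  show "\<exists>\<V> \<W>. \<V> \<union> \<W> = \<U> \<and> \<V> \<inter> \<W> = {} \<and>
      (\<exists>\<V>'\<subseteq>\<V>. \<V>' \<in> B_Lambda Y) \<and> (\<exists>\<W>'\<subseteq>\<W>. \<W>' \<in> B_Lambda Y)"
  proof (rule exI[of _ \<V>Y], rule exI[of _ \<W>Y], intro conjI)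
    show "\<V>Y \<union> \<W>Y = \<U>" using VW(1) unfolding \<V>Y_def \<W>Y_def by blast
    show "\<V>Y \<inter> \<W>Y = {}" using VW(2) unfolding \<V>Y_def \<W>Y_def by blast
    from V' obtain \<V>' where v: "\<V>' \<subseteq> \<V>" "\<V>' \<in> B_Lambda X" by blast
    have vs: "\<V>' \<subseteq> f ` \<U>" using v VW by blast
    have "{U\<in>\<U>. f U \<in> \<V>'} \<subseteq> \<V>Y" using v(1) unfolding \<V>Y_def by blast
    with restr[OF vs v(2)]
    show "\<exists>\<V>'\<subseteq>\<V>Y. \<V>' \<in> B_Lambda Y" by (rule exI[where x="{U\<in>\<U>. f U \<in> \<V>'}", OF conjI, rotated])
    from W' obtain \<W>' where w: "\<W>' \<subseteq> \<W>" "\<W>' \<in> B_Lambda X" by blast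
    have ws: "\<W>' \<subseteq> f ` \<U>" using w VW by blast
    have "{U\<in>\<U>. f U \<in> \<W>'} \<subseteq> \<W>Y" using w(1) unfolding \<W>Y_def by blast
    with restr[OF ws w(2)]
    show "\<exists>\<W>'\<subseteq>\<W>Y. \<W>' \<in> B_Lambda Y" by (rule exI[where x="{U\<in>\<U>. f U \<in> \<W>'}", OF conjI, rotated])
  qed
qed

end
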